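(* Let $q$ be a prime power, $n,k,m$ positive integers, and let $\mathcal C_1,\mathcal C_2$ be two $[n,k,n-k+1]_{q^m/q}$ MRD codes. Then $\mathcal C_1\oplus\mathcal C_2=\{(u\mid v): u\in\mathcal C_1,v\in\mathcal C_2\}\subseteq\mathbb F_{q^m}^{2n}$ is a $[2n,2k]_{q^m/q}$ code whose generalized rank weights are $$d_i(\mathcal C_1\oplus\mathcal C_2)=\begin{cases} n-k+i & \text{if } 1\le i\le k,\\ 2n-2k+i & \text{if } k+1\le i\le 2k.\end{cases}$$
   Context: An $[n,k,d]_{q^m/q}$ code is a $k$-dimensional $\mathbb F_{q^m}$-subspace of $\mathbb F_{q^m}^n$ with minimum rank distance $d$, where the rank weight of $v=(v_1,\ldots,v_n)$ is $\dim_{\mathbb F_q}\langle v_1,\ldots,v_n\rangle_{\mathbb F_q}$ and $d$ is the minimum rank weight of a nonzero codeword. It is MRD if $mk=\min\{m(n-d+1),n(m-d+1)\}$. An $\mathbb F_{q^m}$-subspace $\mathcal A\subseteq\mathbb F_{q^m}^N$ is Galois closed if it is invariant under the coordinatewise $q$-Frobenius map; the $j$-th generalized rank weight of a code $\mathcal C\subseteq\mathbb F_{q^m}^N$ is $d_j(\mathcal C)=\min\{\dim_{\mathbb F_{q^m}}\mathcal A:\mathcal A\text{ Galois closed},\ \dim_{\mathbb F_{q^m}}(\mathcal A\cap\mathcal C)\ge j\}$. *)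

theory Defs
  imports Complex_Main "HOL-Computational_Algebra.Primes" "HOL-Library.Function_Algebras"
begin

text \<open>The field F_(q^m) is a finite field type 'a with CARD('a) = q^m.
 The subfield F_q is the set of fixed points of the q-Frobenius x \<mapsto> x^q.
 Vectors of length N are functions nat \<Rightarrow> 'a vanishing outside {0..<N}.\<close>

definition prime_power :: "nat \<Rightarrow> bool" where
  "prime_power q \<longleftrightarrow> (\<exists>p e. prime p \<and> e > 0 \<and> q = p ^ e)"

definition vscale :: "'a::field \<Rightarrow> (nat \<Rightarrow> 'a) \<Rightarrow> (nat \<Rightarrow> 'a)" where
  "vscale c v = (\<lambda>i. c * v i)"

interpretation fvs: vector_space "vscale :: 'a::field \<Rightarrow> (nat \<Rightarrow> 'a) \<Rightarrow> (nat \<Rightarrow> 'a)"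
  by unfold_locales (auto simp: vscale_def fun_eq_iff algebra_simps)

definition vecs :: "nat \<Rightarrow> (nat \<Rightarrow> 'a::zero) set" where
  "vecs N = {v. \<forall>i\<ge>N. v i = 0}"

definition Fq_indep :: "nat \<Rightarrow> 'a::field set \<Rightarrow> bool" where
  "Fq_indep q S \<longleftrightarrow> finite S \<and>
     (\<forall>c. (\<forall>x\<in>S. c x ^ q = c x) \<longrightarrow> (\<Sum>x\<in>S. c x * x) = 0 \<longrightarrow> (\<forall>x\<in>S. c x = 0))"

definition Fq_dim :: "nat \<Rightarrow> 'a::{field,finite} set \<Rightarrow> nat" where
  "Fq_dim q A = Max {card S | S. S \<subseteq> A \<and> Fq_indep q S}"

definition rank_weight :: "nat \<Rightarrow> nat \<Rightarrow> (nat \<Rightarrow> 'a::{field,finite}) \<Rightarrow> nat" where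
  "rank_weight q N v = Fq_dim q (v ` {..<N})"

definition min_rank_dist :: "nat \<Rightarrow> nat \<Rightarrow> (nat \<Rightarrow> 'a::{field,finite}) set \<Rightarrow> nat" where
  "min_rank_dist q N C = Min {rank_weight q N v | v. v \<in> C \<and> v \<noteq> 0}"

definition is_code :: "nat \<Rightarrow> nat \<Rightarrow> (nat \<Rightarrow> 'a::field) set \<Rightarrow> bool" where
  "is_code N k C \<longleftrightarrow> fvs.subspace C \<and> C \<subseteq> vecs N \<and> fvs.dim C = k"

definition is_code_d :: "nat \<Rightarrow> nat \<Rightarrow> nat \<Rightarrow> nat \<Rightarrow> (nat \<Rightarrow> 'a::{field,finite}) set \<Rightarrow> bool" where
  "is_code_d q N k d C \<longleftrightarrow> is_code N k C \<and> min_rank_dist q N C = d"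

definition is_MRD :: "nat \<Rightarrow> nat \<Rightarrow> nat \<Rightarrow> nat \<Rightarrow> nat \<Rightarrow> (nat \<Rightarrow> 'a::{field,finite}) set \<Rightarrow> bool" where
  "is_MRD q m N k d C \<longleftrightarrow> is_code_d q N k d C \<and>
     m * k = min (m * (N - d + 1)) (N * (m - d + 1))"

definition frob :: "nat \<Rightarrow> (nat \<Rightarrow> 'a::field) \<Rightarrow> (nat \<Rightarrow> 'a)" where
  "frob q v = (\<lambda>i. v i ^ q)"

definition galois_closed :: "nat \<Rightarrow> (nat \<Rightarrow> 'a::field) set \<Rightarrow> bool" where
  "galois_closed q A \<longleftrightarrow> (\<forall>v\<in>A. frob q v \<in> A)"

definition gen_rank_weight :: "nat \<Rightarrow> nat \<Rightarrow> (nat \<Rightarrow> 'a::{field,finite}) set \<Rightarrow> nat \<Rightarrow> nat" where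
  "gen_rank_weight q N C j = Min {fvs.dim A | A. fvs.subspace A \<and> A \<subseteq> vecs N \<and>
      galois_closed q A \<and> fvs.dim (A \<inter> C) \<ge> j}"

definition concat_vec :: "nat \<Rightarrow> (nat \<Rightarrow> 'a) \<Rightarrow> (nat \<Rightarrow> 'a) \<Rightarrow> (nat \<Rightarrow> 'a)" where
  "concat_vec n u v = (\<lambda>i. if i < n then u i else v (i - n))"

definition code_dsum :: "nat \<Rightarrow> (nat \<Rightarrow> 'a) set \<Rightarrow> (nat \<Rightarrow> 'a) set \<Rightarrow> (nat \<Rightarrow> 'a) set" where
  "code_dsum n C1 C2 = {concat_vec n u v | u v. u \<in> C1 \<and> v \<in> C2}"

end

theory Submission
  imports Defs "HOL-Number_Theory.Residues"
begin


lemma vscale_apply[simp]: "vscale c v i = c * v i"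
  by (simp add: vscale_def)

lemma lin_fvsI:
  assumes "\<And>x y. f (x+y) = f x + f y" "\<And>c x. f (vscale c x) = vscale c (f x)"
  shows "Vector_Spaces.linear (vscale::'a::field \<Rightarrow> _) vscale f"
proof -
  have vs: "vector_space (vscale :: 'a::field \<Rightarrow> (nat\<Rightarrow>'a) \<Rightarrow> _)" by unfold_locales (auto simp: vscale_def fun_eq_iff algebra_simps)
  show ?thesis unfolding Vector_Spaces.linear_iff using vs assms by blast
qed

definition uvec :: "nat \<Rightarrow> nat \<Rightarrow> 'a::field" where
  "uvec l = (\<lambda>i. if i = l then 1 else 0)"

lemma vscale_sum_apply: "(\<Sum>x\<in>S. vscale (c x) (g x :: nat \<Rightarrow> 'a::field)) i = (\<Sum>x\<in>S. c x * g x i)"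
  by (induction S rule: infinite_finite_induct) auto

lemma vecs_span: "vecs N \<subseteq> fvs.span (uvec ` {..<N} :: (nat \<Rightarrow> 'a::field) set)"
proof
  fix v :: "nat \<Rightarrow> 'a" assume v: "v \<in> vecs N"
  have "v = (\<Sum>l\<in>{..<N}. vscale (v l) (uvec l))"
  proof
    fix i
    show "v i = (\<Sum>l\<in>{..<N}. vscale (v l) (uvec l)) i"
      using v by (auto simp: vscale_sum_apply uvec_def vecs_def if_distrib cong: if_cong)
  qed
  also have "\<dots> \<in> fvs.span (uvec ` {..<N})"
    by (intro fvs.span_sum fvs.span_scale fvs.span_base) auto
  finally show "v \<in> fvs.span (uvec ` {..<N})" .
qed

lemma indep_vecs_finite:
  assumes "fvs.independent S" "S \<subseteq> fvs.span (vecs N :: (nat \<Rightarrow> 'a::field) set)"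
  shows "finite S \<and> card S \<le> N"
proof -
  have "S \<subseteq> fvs.span (uvec ` {..<N} :: (nat \<Rightarrow> 'a::field) set)"
    using assms(2) vecs_span fvs.span_mono fvs.span_span by (metis subset_trans) 
  from fvs.independent_span_bound[OF _ assms(1) this] have "finite S" "card S \<le> card (uvec ` {..<N} :: (nat \<Rightarrow> 'a::field) set)"
    by auto
  then show ?thesis
    using card_image_le[of "{..<N}" "uvec :: nat \<Rightarrow> nat \<Rightarrow> 'a"] by (metis card_lessThan finite_lessThan le_trans)
qed

lemma dim_mono':
  assumes "V \<subseteq> fvs.span W" "W \<subseteq> fvs.span (vecs N :: (nat \<Rightarrow> 'a::field) set)"
  shows "fvs.dim V \<le> fvs.dim W"
proof -
  obtain B where B: "B \<subseteq> W" "fvs.independent B" "W \<subseteq> fvs.span B" "card B = fvs.dim W"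
    using fvs.basis_exists by blast
  have "finite B" using indep_vecs_finite[OF B(2)] B(1) assms(2) by blast
  have "V \<subseteq> fvs.span B" using assms(1) B(3)
    by (metis fvs.span_mono fvs.span_span subset_trans)
  then show ?thesis using fvs.dim_le_card[OF _ \<open>finite B\<close>] B(4) by simp
qed

lemma dim_le_N:
  assumes "V \<subseteq> fvs.span (vecs N :: (nat \<Rightarrow> 'a::field) set)"
  shows "fvs.dim V \<le> N"
proof -
  have "V \<subseteq> fvs.span (uvec ` {..<N} :: (nat \<Rightarrow> 'a::field) set)"
    using assms vecs_span fvs.span_mono fvs.span_span by (metis subset_trans) 
  then have "fvs.dim V \<le> card (uvec ` {..<N} :: (nat \<Rightarrow> 'a::field) set)"
    by (intro fvs.dim_le_card) auto
  also have "\<dots> \<le> N" using card_image_le[of "{..<N}" "uvec :: nat \<Rightarrow> nat \<Rightarrow> 'a"] by auto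
  finally show ?thesis .
qed



lemma span_disjoint_zero:
  fixes B :: "(nat \<Rightarrow> 'a::field) set"
  assumes "fvs.independent B" "finite B" "B0 \<subseteq> B"
    and "x \<in> fvs.span B0" "x \<in> fvs.span (B - B0)"
  shows "x = 0"
proof -
  have fB0: "finite B0" using assms(2,3) finite_subset by blast
  have fB1: "finite (B - B0)" using assms(2) by blast
  obtain a where a: "x = (\<Sum>v\<in>B0. vscale (a v) v)"
    using assms(4) fvs.span_finite[OF fB0] by auto
  obtain c where c: "x = (\<Sum>v\<in>B-B0. vscale (c v) v)"
    using assms(5) fvs.span_finite[OF fB1] by auto
  define u where "u v = (if v \<in> B0 then a v else - c v)" for v
  have "(\<Sum>v\<in>B. vscale (u v) v) = (\<Sum>v\<in>B0. vscale (u v) v) + (\<Sum>v\<in>B-B0. vscale (u v) v)"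
    using sum.subset_diff[OF assms(3,2)] by (simp add: add.commute)
  also have "(\<Sum>v\<in>B0. vscale (u v) v) = x" unfolding a by (rule sum.cong) (auto simp: u_def)
  also have "(\<Sum>v\<in>B-B0. vscale (u v) v) = - x" unfolding c
    by (simp add: u_def fvs.scale_minus_left sum_negf)
  finally have "(\<Sum>v\<in>B. vscale (u v) v) = 0" by (simp only: add.right_inverse)
  then have "\<forall>v\<in>B0. u v = 0" using fvs.independentD[OF assms(1,2) subset_refl] assms(3) by blast
  then show ?thesis unfolding a by (simp add: u_def)
qed

lemma rank_nullity:
  fixes f :: "(nat \<Rightarrow> 'a::field) \<Rightarrow> (nat \<Rightarrow> 'a)"
  assumes lin: "Vector_Spaces.linear vscale vscale f"
    and V: "fvs.subspace V" "V \<subseteq> fvs.span (vecs N)"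
  shows "fvs.dim V = fvs.dim {x\<in>V. f x = 0} + fvs.dim (f ` V)"
proof -
  interpret lf: Vector_Spaces.linear vscale vscale f by (rule lin)
  define K where "K = {x\<in>V. f x = 0}"
  obtain B0 where B0: "B0 \<subseteq> K" "fvs.independent B0" "K \<subseteq> fvs.span B0" "card B0 = fvs.dim K"
    using fvs.basis_exists by blast
  obtain B where B: "B0 \<subseteq> B" "B \<subseteq> V" "fvs.independent B" "V \<subseteq> fvs.span B"
    using fvs.maximal_independent_subset_extend[of B0 V] B0(1,2) K_def by blast
  have fB: "finite B" using indep_vecs_finite[OF B(3)] B(2) V(2) by blast
  have cB: "card B = fvs.dim V" using fvs.basis_card_eq_dim B(2,3,4) by blast
  define B1 where "B1 = B - B0"
  have spB1V: "fvs.span B1 \<subseteq> V"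
    using B(2) V(1) B1_def by (intro fvs.span_minimal) auto
  have img: "f ` V = fvs.span (f ` B1)"
  proof
    show "fvs.span (f ` B1) \<subseteq> f ` V" using spB1V lf.span_image by auto
    have "f ` B \<subseteq> insert 0 (f ` B1)" using B0(1) K_def B1_def by auto
    then have "fvs.span (f ` B) \<subseteq> fvs.span (f ` B1)"
      by (metis fvs.span_insert_0 fvs.span_mono)
    moreover have "f ` V \<subseteq> fvs.span (f ` B)" using B(4) lf.span_image by auto
    ultimately show "f ` V \<subseteq> fvs.span (f ` B1)" by blast
  qed
  have inj: "inj_on f (fvs.span B1)"
  proof (subst lf.inj_on_iff_eq_0[OF fvs.subspace_span], intro ballI impI)
    fix x assume x: "x \<in> fvs.span B1" "f x = 0"
    then have "x \<in> K" using spB1V K_def by auto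
    then have "x \<in> fvs.span B0" using B0(3) by blast
    then show "x = 0" using span_disjoint_zero[OF B(3) fB B(1)] x(1) B1_def by blast
  qed
  have indep: "fvs.independent (f ` B1)"
    using lf.independent_injective_image[OF _ inj] fvs.independent_mono[OF B(3)] B1_def by blast
  have "fvs.dim (f ` V) = card (f ` B1)"
    using img fvs.dim_span_eq_card_independent[OF indep] by simp
  also have "\<dots> = card B1"
    using card_image inj_on_subset[OF inj fvs.span_superset] by blast
  finally have "fvs.dim (f ` V) = card B1" .
  moreover have "card B = card B1 + card B0"
    using B1_def B(1) fB by (metis card_Un_disjoint Diff_disjoint Diff_partition finite_Diff finite_subset inf_commute add.commute)
  ultimately show ?thesis
    using cB B0(4) K_def by simp
qed



lemma frob_add:
  fixes x y :: "'a::{field,finite}"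
  assumes "prime_power q" "card (UNIV :: 'a set) = q ^ m" "m > 0"
  shows "(x + y) ^ q = x ^ q + y ^ q"
proof -
  obtain p e where pe: "prime p" "e > 0" "q = p ^ e" using assms(1) prime_power_def by blast
  have cpos: "CHAR('a) > 0" by (rule finite_imp_CHAR_pos) simp
  have cpr: "prime CHAR('a)" using prime_CHAR_semidom[OF cpos] .
  have "CHAR('a) dvd p ^ (e * m)" using CHAR_dvd_CARD[where 'a='a] assms(2) pe(3)
    by (simp add: power_mult)
  then have "CHAR('a) dvd p" using cpr prime_dvd_power by blast
  then have "CHAR('a) = p" using cpr pe(1) primes_dvd_imp_eq by blast
  then show ?thesis using freshmans_dream'[OF cpr, of q e] pe(3) by simp
qed

locale fqctx =
  fixes q :: nat and m :: nat
  assumes pp: "prime_power q" and cardq: "card (UNIV :: 'a::{field,finite} set) = q ^ m" and mpos: "m > 0"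
begin

lemma qpos: "q > 0" using pp unfolding prime_power_def by (auto simp: prime_gt_0_nat)
lemma qge2: "q \<ge> 2" using pp unfolding prime_power_def
  by (metis One_nat_def Suc_1 Suc_leI less_one nat_neq_iff not_gr0 one_less_power prime_gt_1_nat)

lemma fadd: "((x::'a) + y) ^ q = x ^ q + y ^ q"
  using frob_add[OF pp cardq mpos] .

lemma fdiff: "((x::'a) - y) ^ q = x ^ q - y ^ q"
  using fadd[of "x - y" y] by (simp add: algebra_simps)

lemma fsum: "(\<Sum>i\<in>A. f i :: 'a) ^ q = (\<Sum>i\<in>A. f i ^ q)"
  by (induction A rule: infinite_finite_induct) (auto simp: fadd qpos)

definition Fq :: "'a set" where "Fq = {x. x ^ q = x}"

lemma Fq0[simp]: "0 \<in> Fq" using qpos by (simp add: Fq_def)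
lemma Fq1[simp]: "1 \<in> Fq" by (simp add: Fq_def)
lemma Fq_add: "a \<in> Fq \<Longrightarrow> b \<in> Fq \<Longrightarrow> a + b \<in> Fq" by (simp add: Fq_def fadd)
lemma Fq_diff: "a \<in> Fq \<Longrightarrow> b \<in> Fq \<Longrightarrow> a - b \<in> Fq" by (simp add: Fq_def fdiff)
lemma Fq_mult: "a \<in> Fq \<Longrightarrow> b \<in> Fq \<Longrightarrow> a * b \<in> Fq" by (simp add: Fq_def power_mult_distrib)
lemma Fq_sum: "(\<And>i. i \<in> A \<Longrightarrow> f i \<in> Fq) \<Longrightarrow> (\<Sum>i\<in>A. f i) \<in> Fq"
  by (simp add: Fq_def fsum)

lemma card_Fq: "card Fq \<ge> 2"
proof -
  have "{0, 1} \<subseteq> Fq" by simp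
  then have "card {0::'a, 1} \<le> card Fq" by (intro card_mono) auto
  then show ?thesis by simp
qed

lemma count_indep:
  fixes S :: "'a set" and y :: "nat \<Rightarrow> 'a"
  assumes fJ: "finite J" and fS: "finite S"
    and rep: "\<And>x. x \<in> S \<Longrightarrow> \<exists>a. (\<forall>j\<in>J. a j \<in> Fq) \<and> x = (\<Sum>j\<in>J. a j * y j)"
    and ind: "\<And>c. (\<forall>x\<in>S. c x \<in> Fq) \<Longrightarrow> (\<Sum>x\<in>S. c x * x) = 0 \<Longrightarrow> (\<forall>x\<in>S. c x = 0)"
  shows "card S \<le> card J"
proof -
  define A where "A x = (SOME a. (\<forall>j\<in>J. a j \<in> Fq) \<and> x = (\<Sum>j\<in>J. a j * y j))" for x
  have A: "(\<forall>j\<in>J. A x j \<in> Fq) \<and> x = (\<Sum>j\<in>J. A x j * y j)" if "x \<in> S" for x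
    using someI_ex[OF rep[OF that]] unfolding A_def by blast
  define Phi where "Phi c = (\<Sum>x\<in>S. c x * x)" for c
  define Psi where "Psi e = (\<Sum>j\<in>J. e j * y j)" for e
  have inj: "inj_on Phi (PiE S (\<lambda>_. Fq))"
  proof (rule inj_onI)
    fix c c' assume c: "c \<in> PiE S (\<lambda>_. Fq)" and c': "c' \<in> PiE S (\<lambda>_. Fq)" and eq: "Phi c = Phi c'"
    have "(\<Sum>x\<in>S. (c x - c' x) * x) = 0"
      using eq unfolding Phi_def by (simp add: algebra_simps sum_subtractf)
    moreover have "\<forall>x\<in>S. c x - c' x \<in> Fq" using c c' Fq_diff by auto
    ultimately have "\<forall>x\<in>S. c x - c' x = 0" using ind[of "\<lambda>x. c x - c' x"] by blast
    then show "c = c'" using c c' by (intro PiE_ext) auto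
  qed
  have sub: "Phi ` PiE S (\<lambda>_. Fq) \<subseteq> Psi ` PiE J (\<lambda>_. Fq)"
  proof
    fix z assume "z \<in> Phi ` PiE S (\<lambda>_. Fq)"
    then obtain c where c: "c \<in> PiE S (\<lambda>_. Fq)" and z: "z = Phi c" by blast
    define e where "e = restrict (\<lambda>j. \<Sum>x\<in>S. c x * A x j) J"
    have "e \<in> PiE J (\<lambda>_. Fq)" unfolding e_def using c A
      by (auto intro!: Fq_sum Fq_mult)
    moreover have "Psi e = z"
    proof -
      have "Psi e = (\<Sum>j\<in>J. (\<Sum>x\<in>S. c x * A x j) * y j)"
        unfolding Psi_def e_def by (intro sum.cong) auto
      also have "\<dots> = (\<Sum>x\<in>S. c x * (\<Sum>j\<in>J. A x j * y j))"
      proof -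
        have "(\<Sum>j\<in>J. (\<Sum>x\<in>S. c x * A x j) * y j) = (\<Sum>j\<in>J. \<Sum>x\<in>S. c x * (A x j * y j))"
          by (simp add: sum_distrib_right mult.assoc)
        also have "\<dots> = (\<Sum>x\<in>S. \<Sum>j\<in>J. c x * (A x j * y j))" by (rule sum.swap)
        also have "\<dots> = (\<Sum>x\<in>S. c x * (\<Sum>j\<in>J. A x j * y j))" by (simp add: sum_distrib_left)
        finally show ?thesis .
      qed
      also have "\<dots> = (\<Sum>x\<in>S. c x * x)" using A by (intro sum.cong) auto
      finally show ?thesis using z Phi_def by simp
    qed
    ultimately show "z \<in> Psi ` PiE J (\<lambda>_. Fq)" by blast
  qed
  have fF: "finite Fq" by simp
  have "card Fq ^ card S = card (PiE S (\<lambda>_. Fq))" using card_PiE[OF fS, of "\<lambda>_. Fq"] by simp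
  also have "\<dots> = card (Phi ` PiE S (\<lambda>_. Fq))" using card_image[OF inj] by simp
  also have "\<dots> \<le> card (Psi ` PiE J (\<lambda>_. Fq))"
    by (intro card_mono sub finite_imageI finite_PiE fJ fF)
  also have "\<dots> \<le> card (PiE J (\<lambda>_. Fq))" by (intro card_image_le finite_PiE fJ fF)
  also have "\<dots> = card Fq ^ card J" using card_PiE[OF fJ, of "\<lambda>_. Fq"] by simp
  finally have "card Fq ^ card S \<le> card Fq ^ card J" .
  moreover have "1 < card Fq" using card_Fq by simp
  ultimately show ?thesis using power_le_imp_le_exp by blast
qed

end



lemma Fq_dim_set_fin: "finite X \<Longrightarrow> finite {card S | S. S \<subseteq> X \<and> Fq_indep q S}"
proof -
  assume "finite X"
  have "{card S | S. S \<subseteq> X \<and> Fq_indep q S} \<subseteq> card ` Pow X" by auto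
  then show ?thesis using \<open>finite X\<close> finite_subset by blast
qed

lemma Fq_dim_set_ne: "{card S | S. S \<subseteq> X \<and> Fq_indep q S} \<noteq> {}"
proof -
  have "Fq_indep q {}" by (simp add: Fq_indep_def)
  then show ?thesis by blast
qed

lemma Fq_dim_le:
  assumes "finite X" "\<And>S. S \<subseteq> X \<Longrightarrow> Fq_indep q S \<Longrightarrow> card S \<le> t"
  shows "Fq_dim q X \<le> t"
  unfolding Fq_dim_def using Fq_dim_set_fin[OF assms(1), of q] Fq_dim_set_ne[of X q] assms(2)
  by (subst Max_le_iff) auto

lemma Fq_dim_mono:
  assumes "finite Y" "X \<subseteq> Y"
  shows "Fq_dim q X \<le> Fq_dim q Y"
  unfolding Fq_dim_def
  by (rule Max_mono) (use assms Fq_dim_set_fin[OF assms(1), of q] Fq_dim_set_ne[of X q] in auto)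

context fqctx
begin

lemma descent:
  fixes B :: "(nat \<Rightarrow> 'a) set"
  assumes B: "fvs.subspace B" "B \<subseteq> vecs N" "galois_closed q B"
  obtains J W where "finite J" "card J \<le> fvs.dim B" "\<forall>j\<in>J. \<forall>l. W j l \<in> Fq"
    "\<forall>v\<in>B. \<forall>l. v l = (\<Sum>j\<in>J. v j * W j l)"
proof -
  define P where "P J \<longleftrightarrow> J \<subseteq> {..<N} \<and> (\<forall>w\<in>B. (\<forall>j\<in>J. w j = 0) \<longrightarrow> w = 0)" for J
  have "P {..<N}" unfolding P_def
  proof (intro conjI ballI impI subset_refl)
    fix w assume w: "w \<in> B" "\<forall>j\<in>{..<N}. w j = 0"
    show "w = 0"
    proof
      fix i show "w i = 0 i" using w B(2) by (cases "i < N") (auto simp: vecs_def)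
    qed
  qed
  then obtain J where PJ: "P J" and min: "\<And>J'. P J' \<Longrightarrow> card J \<le> card J'"
    using ex_has_least_nat[of P "{..<N}" card] by blast
  have fJ: "finite J" using PJ P_def finite_subset by blast
  have ex: "\<exists>w. w \<in> B \<and> w j = 1 \<and> (\<forall>j'\<in>J. j' \<noteq> j \<longrightarrow> w j' = 0)" if j: "j \<in> J" for j
  proof -
    have lt: "card (J - {j}) < card J" using card_Diff1_less[OF fJ j] .
    have "\<not> P (J - {j})"
    proof
      assume "P (J - {j})"
      from min[OF this] show False using lt by simp
    qed
    then obtain w where w: "w \<in> B" "\<forall>j'\<in>J - {j}. w j' = 0" "w \<noteq> 0"
      using PJ unfolding P_def by blast
    have wj: "w j \<noteq> 0"
    proof
      assume "w j = 0"
      then have "\<forall>j'\<in>J. w j' = 0" using w(2) by blast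
      then show False using PJ w(1) w(3) unfolding P_def by blast
    qed
    have sB: "vscale (inverse (w j)) w \<in> B" using fvs.subspace_scale[OF B(1) w(1)] .
    have "\<forall>j'\<in>J. j' \<noteq> j \<longrightarrow> vscale (inverse (w j)) w j' = 0" using w(2) by simp
    moreover have "vscale (inverse (w j)) w j = 1" using wj by simp
    ultimately show ?thesis using sB by blast
  qed
  define W where "W j = (SOME w. w \<in> B \<and> w j = 1 \<and> (\<forall>j'\<in>J. j' \<noteq> j \<longrightarrow> w j' = 0))" for j
  have WB: "W j \<in> B \<and> W j j = 1 \<and> (\<forall>j'\<in>J. j' \<noteq> j \<longrightarrow> W j j' = 0)" if "j \<in> J" for j
    using someI_ex[OF ex[OF that]] unfolding W_def by blast
  have Wfix: "\<forall>l. W j l \<in> Fq" if j: "j \<in> J" for j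
  proof -
    have "frob q (W j) \<in> B" using B(3) WB[OF j] galois_closed_def by blast
    then have d: "frob q (W j) - W j \<in> B" using fvs.subspace_diff[OF B(1)] WB[OF j] by blast
    have "\<forall>j'\<in>J. (frob q (W j) - W j) j' = 0"
      using WB[OF j] qpos by (auto simp: frob_def)
    then have z: "frob q (W j) - W j = 0" using PJ d unfolding P_def by blast
    show ?thesis
    proof
      fix l
      have "(frob q (W j) - W j) l = 0" using z by simp
      then show "W j l \<in> Fq" by (simp add: Fq_def frob_def)
    qed
  qed
  have rep: "\<forall>l. v l = (\<Sum>j\<in>J. v j * W j l)" if v: "v \<in> B" for v
  proof -
    define u where "u = v - (\<Sum>j\<in>J. vscale (v j) (W j))"
    have "(\<Sum>j\<in>J. vscale (v j) (W j)) \<in> B"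
      using WB by (intro fvs.subspace_sum[OF B(1)] fvs.subspace_scale[OF B(1)]) auto
    then have uB: "u \<in> B" using fvs.subspace_diff[OF B(1) v] u_def by blast
    have "u j0 = 0" if j0: "j0 \<in> J" for j0
    proof -
      have "(\<Sum>j\<in>J. v j * W j j0) = (\<Sum>j\<in>J. if j = j0 then v j0 else 0)"
      proof (intro sum.cong refl)
        fix j assume "j \<in> J" then show "v j * W j j0 = (if j = j0 then v j0 else 0)"
          using WB[OF \<open>j \<in> J\<close>] j0 by auto
      qed
      also have "\<dots> = v j0" using fJ j0 by simp
      finally show ?thesis unfolding u_def by (simp add: vscale_sum_apply)
    qed
    then have z: "u = 0" using PJ uB unfolding P_def by blast
    show ?thesis
    proof
      fix l
      have "u l = 0" using z by simp
      then show "v l = (\<Sum>j\<in>J. v j * W j l)" unfolding u_def by (simp add: vscale_sum_apply)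
    qed
  qed
  have injW: "inj_on W J"
  proof (rule inj_onI)
    fix a b assume "a \<in> J" "b \<in> J" "W a = W b"
    then show "a = b" using WB[of a] WB[of b] by (metis zero_neq_one)
  qed
  have indW: "fvs.independent (W ` J)"
  proof (rule fvs.independent_if_scalars_zero)
    show "finite (W ` J)" using fJ by simp
    fix f x assume s: "(\<Sum>x\<in>W ` J. vscale (f x) x) = 0" and x: "x \<in> W ` J"
    then obtain j0 where j0: "j0 \<in> J" "x = W j0" by blast
    have "0 = (\<Sum>y\<in>W ` J. vscale (f y) y) j0" using s by simp
    also have "\<dots> = (\<Sum>j\<in>J. f (W j) * W j j0)"
      by (simp add: vscale_sum_apply sum.reindex[OF injW])
    also have "\<dots> = (\<Sum>j\<in>J. if j = j0 then f (W j0) else 0)"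
    proof (intro sum.cong refl)
      fix j assume "j \<in> J" then show "f (W j) * W j j0 = (if j = j0 then f (W j0) else 0)"
        using WB[OF \<open>j \<in> J\<close>] j0 by auto
    qed
    also have "\<dots> = f (W j0)" using fJ j0 by simp
    finally show "f x = 0" using j0 by simp
  qed
  have "card J = card (W ` J)" using card_image[OF injW] by simp
  also have "\<dots> = fvs.dim (W ` J)" using fvs.dim_eq_card_independent[OF indW] by simp
  also have "\<dots> \<le> fvs.dim B"
  proof (rule dim_mono'[of _ _ N])
    show "W ` J \<subseteq> fvs.span B" using WB fvs.span_superset by blast
    show "B \<subseteq> fvs.span (vecs N)" using B(2) fvs.span_superset by blast
  qed
  finally have cJ: "card J \<le> fvs.dim B" .
  show ?thesis
  proof (rule that[OF fJ cJ])
    show "\<forall>j\<in>J. \<forall>l. W j l \<in> Fq" using Wfix by blast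
    show "\<forall>v\<in>B. \<forall>l. v l = (\<Sum>j\<in>J. v j * W j l)" using rep by blast
  qed
qed

lemma rank_le_dim:
  fixes B :: "(nat \<Rightarrow> 'a) set"
  assumes B: "fvs.subspace B" "B \<subseteq> vecs N" "galois_closed q B" and v: "v \<in> B"
  shows "rank_weight q N v \<le> fvs.dim B"
proof -
  obtain J W where J: "finite J" "card J \<le> fvs.dim B" "\<forall>j\<in>J. \<forall>l. W j l \<in> Fq"
    "\<forall>v\<in>B. \<forall>l. v l = (\<Sum>j\<in>J. v j * W j l)"
    using descent[OF B] by blast
  have "card S \<le> card J" if S: "S \<subseteq> v ` {..<N}" "Fq_indep q S" for S
  proof (rule count_indep[OF J(1), of S v])
    show "finite S" using S(2) Fq_indep_def by blast
    fix x assume "x \<in> S"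
    then obtain l where "x = v l" using S(1) by blast
    then show "\<exists>a. (\<forall>j\<in>J. a j \<in> Fq) \<and> x = (\<Sum>j\<in>J. a j * v j)"
      using J(3) J(4) v by (intro exI[of _ "\<lambda>j. W j l"]) (auto simp: mult.commute)
  next
    fix c :: "'a \<Rightarrow> 'a" assume "\<forall>x\<in>S. c x \<in> Fq" "(\<Sum>x\<in>S. c x * x) = 0"
    then show "\<forall>x\<in>S. c x = 0" using S(2) unfolding Fq_indep_def Fq_def by blast
  qed
  then show ?thesis unfolding rank_weight_def
    using J(2) by (intro Fq_dim_le) (auto intro: le_trans)
qed

end



declare vscale_apply[simp del]

definition hl :: "nat \<Rightarrow> (nat \<Rightarrow> 'a::field) \<Rightarrow> (nat \<Rightarrow> 'a)" where
  "hl l x = (\<lambda>i. if i = 0 then x l else 0)"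

lemma lin_hl: "Vector_Spaces.linear vscale vscale (hl l :: (nat \<Rightarrow> 'a::field) \<Rightarrow> _)"
  by (rule lin_fvsI) (auto simp: hl_def fun_eq_iff vscale_apply)

lemma hl_zero_iff: "hl l x = 0 \<longleftrightarrow> x l = 0"
  by (auto simp: hl_def fun_eq_iff)

lemma dim_zero_sub:
  assumes "S \<subseteq> fvs.span (vecs N :: (nat \<Rightarrow> 'a::field) set)" "fvs.dim S = 0"
  shows "S \<subseteq> {0}"
proof -
  obtain B where B: "B \<subseteq> S" "fvs.independent B" "S \<subseteq> fvs.span B" "card B = fvs.dim S"
    using fvs.basis_exists by blast
  have "finite B" using indep_vecs_finite[OF B(2)] B(1) assms(1) by blast
  then have "B = {}" using B(4) assms(2) by simp
  then show ?thesis using B(3) fvs.span_empty by simp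
qed

lemma dim_zero_if: "S \<subseteq> {0} \<Longrightarrow> fvs.dim (S :: (nat \<Rightarrow> 'a::field) set) = 0"
  using fvs.dim_le_card[of S "{}"] fvs.span_empty by auto

lemma dim_pos_if:
  assumes "S \<subseteq> fvs.span (vecs N :: (nat \<Rightarrow> 'a::field) set)" "x \<in> S" "x \<noteq> 0"
  shows "fvs.dim S \<ge> 1"
proof (rule ccontr)
  assume "\<not> 1 \<le> fvs.dim S"
  then have "fvs.dim S = 0" by simp
  then have "S \<subseteq> {0}" using dim_zero_sub[OF assms(1)] by blast
  then show False using assms(2,3) by blast
qed

lemma span_vecs: "V \<subseteq> vecs N \<Longrightarrow> V \<subseteq> fvs.span (vecs N)"
  using fvs.span_superset by blast

lemma subspace_ker:
  assumes "fvs.subspace V" "Vector_Spaces.linear vscale vscale f"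
  shows "fvs.subspace {x\<in>V. f x = (0::nat \<Rightarrow> 'a::field)}"
proof -
  interpret lf: Vector_Spaces.linear vscale vscale f by (rule assms(2))
  have "{x\<in>V. f x = 0} = V \<inter> {x. f x = 0}" by auto
  then show ?thesis using fvs.subspace_inter[OF assms(1) lf.subspace_kernel] by simp
qed

lemma subspace_img:
  assumes "fvs.subspace V" "Vector_Spaces.linear vscale vscale f"
  shows "fvs.subspace (f ` V :: (nat \<Rightarrow> 'a::field) set)"
proof -
  interpret lf: Vector_Spaces.linear vscale vscale f by (rule assms(2))
  show ?thesis using lf.subspace_image[OF assms(1)] .
qed

lemma dim_hl_le1: "fvs.dim (hl l ` (V :: (nat \<Rightarrow> 'a::field) set)) \<le> 1"
proof -
  have "hl l ` V \<subseteq> fvs.span {uvec 0 :: nat \<Rightarrow> 'a}"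
  proof
    fix y assume "y \<in> hl l ` V"
    then obtain x where "y = hl l x" by blast
    then have "y = vscale (x l) (uvec 0)" by (auto simp: hl_def uvec_def fun_eq_iff vscale_apply)
    then show "y \<in> fvs.span {uvec 0}" by (simp add: fvs.span_base fvs.span_scale)
  qed
  then show ?thesis using fvs.dim_le_card[of _ "{uvec 0 :: nat \<Rightarrow> 'a}"] by simp
qed

lemma hyperplane_dim:
  fixes V :: "(nat \<Rightarrow> 'a::field) set"
  assumes "fvs.subspace V" "V \<subseteq> vecs N"
  shows "fvs.dim V \<le> fvs.dim {x\<in>V. x l = 0} + 1"
    and "(\<exists>c\<in>V. c l \<noteq> 0) \<Longrightarrow> fvs.dim V = fvs.dim {x\<in>V. x l = 0} + 1"
proof -
  have rn: "fvs.dim V = fvs.dim {x\<in>V. hl l x = 0} + fvs.dim (hl l ` V)"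
    using rank_nullity[OF lin_hl assms(1) span_vecs[OF assms(2)]] .
  have eq: "{x\<in>V. hl l x = 0} = {x\<in>V. x l = 0}" by (simp add: hl_zero_iff)
  show "fvs.dim V \<le> fvs.dim {x\<in>V. x l = 0} + 1" using rn eq dim_hl_le1[of l V] by simp
  assume "\<exists>c\<in>V. c l \<noteq> 0"
  then obtain c where c: "c \<in> V" "c l \<noteq> 0" by blast
  have v1: "hl l ` V \<subseteq> vecs 1" by (auto simp: hl_def vecs_def)
  have "hl l c \<in> hl l ` V" "hl l c \<noteq> 0" using c hl_zero_iff by auto
  then have "fvs.dim (hl l ` V) \<ge> 1" using dim_pos_if[OF span_vecs[OF v1]] by blast
  then show "fvs.dim V = fvs.dim {x\<in>V. x l = 0} + 1" using rn eq dim_hl_le1[of l V] by simp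
qed

context fqctx
begin

lemma lowerH_aux:
  fixes B C' :: "(nat \<Rightarrow> 'a) set"
  assumes "fvs.subspace C'"
    and wt: "\<And>c. c \<in> C' \<Longrightarrow> c \<noteq> 0 \<Longrightarrow> \<delta> \<le> rank_weight q N c"
  shows "fvs.subspace B \<Longrightarrow> B \<subseteq> vecs N \<Longrightarrow> galois_closed q B \<Longrightarrow> Suc j \<le> fvs.dim (B \<inter> C') \<Longrightarrow> \<delta> + Suc j \<le> fvs.dim B + 1"
proof (induction j arbitrary: B)
  case 0
  note base = 0
  have sub: "B \<inter> C' \<subseteq> fvs.span (vecs N)" using span_vecs base(2) by blast
  have "\<not> B \<inter> C' \<subseteq> {0}"
  proof
    assume "B \<inter> C' \<subseteq> {0}"
    then have "fvs.dim (B \<inter> C') = 0" by (rule dim_zero_if)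
    then show False using base(4) by simp
  qed
  then obtain c where c: "c \<in> B" "c \<in> C'" "c \<noteq> 0" by blast
  have "\<delta> \<le> rank_weight q N c" using wt c by blast
  also have "\<dots> \<le> fvs.dim B" using rank_le_dim[OF base(1-3) c(1)] .
  finally show ?case by simp
next
  case (Suc j)
  have sub: "B \<inter> C' \<subseteq> fvs.span (vecs N)" using span_vecs Suc(3) by blast
  have "\<not> B \<inter> C' \<subseteq> {0}"
  proof
    assume "B \<inter> C' \<subseteq> {0}"
    then have "fvs.dim (B \<inter> C') = 0" by (rule dim_zero_if)
    then show False using Suc(5) by simp
  qed
  then obtain c where c: "c \<in> B" "c \<in> C'" "c \<noteq> 0" by blast
  then obtain l where l: "c l \<noteq> 0" by (auto simp: fun_eq_iff)
  define B' where "B' = {x\<in>B. x l = 0}"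
  have sB': "fvs.subspace B'"
    using subspace_ker[OF Suc(2) lin_hl, of l] unfolding B'_def by (simp add: hl_zero_iff)
  have vB': "B' \<subseteq> vecs N" using Suc(3) B'_def by blast
  have gB': "galois_closed q B'" using Suc(4) qpos unfolding galois_closed_def B'_def
    by (auto simp: frob_def)
  have sBC: "fvs.subspace (B \<inter> C')" using fvs.subspace_inter[OF Suc(2) assms(1)] .
  have d1: "fvs.dim (B \<inter> C') \<le> fvs.dim {x\<in>B \<inter> C'. x l = 0} + 1"
    using hyperplane_dim(1)[OF sBC] Suc(3) by blast
  have eqI: "{x\<in>B \<inter> C'. x l = 0} = B' \<inter> C'" unfolding B'_def by auto
  have "Suc j \<le> fvs.dim (B' \<inter> C')" using d1 eqI Suc(5) by simp
  from Suc.IH[OF sB' vB' gB' this] have "\<delta> + Suc j \<le> fvs.dim B' + 1" .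
  moreover have "fvs.dim B = fvs.dim B' + 1"
    using hyperplane_dim(2)[OF Suc(2,3)] c(1) l B'_def by blast
  ultimately show ?case by simp
qed

lemma lowerH:
  fixes B C' :: "(nat \<Rightarrow> 'a) set"
  assumes "fvs.subspace B" "B \<subseteq> vecs N" "galois_closed q B" "fvs.subspace C'"
    and wt: "\<And>c. c \<in> C' \<Longrightarrow> c \<noteq> 0 \<Longrightarrow> \<delta> \<le> rank_weight q N c"
    and "1 \<le> j" "j \<le> fvs.dim (B \<inter> C')"
  shows "\<delta> + j \<le> fvs.dim B + 1"
proof -
  obtain j' where "j = Suc j'" using assms(6) by (cases j) auto
  then show ?thesis using lowerH_aux[OF assms(4) wt assms(1-3)] assms(7) by blast
qed

end



definition p2 :: "nat \<Rightarrow> (nat \<Rightarrow> 'a) \<Rightarrow> (nat \<Rightarrow> 'a)" where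
  "p2 n w = (\<lambda>i. w (i + n))"

definition i1 :: "nat \<Rightarrow> (nat \<Rightarrow> 'a::zero) \<Rightarrow> (nat \<Rightarrow> 'a)" where
  "i1 n u = concat_vec n u 0"

definition tr :: "nat \<Rightarrow> (nat \<Rightarrow> 'a::zero) \<Rightarrow> (nat \<Rightarrow> 'a)" where
  "tr t x = (\<lambda>l. if l < t then 0 else x l)"

lemma lin_p2: "Vector_Spaces.linear vscale vscale (p2 n :: (nat \<Rightarrow> 'a::field) \<Rightarrow> _)"
  by (rule lin_fvsI) (auto simp: p2_def fun_eq_iff vscale_apply)

lemma lin_i1: "Vector_Spaces.linear vscale vscale (i1 n :: (nat \<Rightarrow> 'a::field) \<Rightarrow> _)"
  by (rule lin_fvsI) (auto simp: i1_def concat_vec_def fun_eq_iff vscale_apply)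

lemma lin_tr: "Vector_Spaces.linear vscale vscale (tr t :: (nat \<Rightarrow> 'a::field) \<Rightarrow> _)"
  by (rule lin_fvsI) (auto simp: tr_def fun_eq_iff vscale_apply)

lemma p2_concat[simp]: "p2 n (concat_vec n u v) = v"
  by (auto simp: p2_def concat_vec_def)

lemma dim_inj_image:
  fixes f :: "(nat \<Rightarrow> 'a::field) \<Rightarrow> (nat \<Rightarrow> 'a)"
  assumes "Vector_Spaces.linear vscale vscale f" "fvs.subspace V" "V \<subseteq> vecs N"
    and "\<And>x. x \<in> V \<Longrightarrow> f x = 0 \<Longrightarrow> x = 0"
  shows "fvs.dim (f ` V) = fvs.dim V"
proof -
  have "{x\<in>V. f x = 0} \<subseteq> {0}" using assms(4) by blast
  then have "fvs.dim {x\<in>V. f x = 0} = 0" by (rule dim_zero_if)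
  then show ?thesis using rank_nullity[OF assms(1,2) span_vecs[OF assms(3)]] by simp
qed

lemma span_T:
  assumes "finite T"
  shows "{w. \<forall>l. l \<notin> T \<longrightarrow> w l = 0} \<subseteq> fvs.span (uvec ` T :: (nat \<Rightarrow> 'a::field) set)"
proof
  fix v :: "nat \<Rightarrow> 'a" assume v: "v \<in> {w. \<forall>l. l \<notin> T \<longrightarrow> w l = 0}"
  have "v = (\<Sum>l\<in>T. vscale (v l) (uvec l))"
  proof
    fix i
    show "v i = (\<Sum>l\<in>T. vscale (v l) (uvec l)) i"
      using v assms by (auto simp: vscale_sum_apply uvec_def if_distrib cong: if_cong)
  qed
  also have "\<dots> \<in> fvs.span (uvec ` T)"
    by (intro fvs.span_sum fvs.span_scale fvs.span_base) auto
  finally show "v \<in> fvs.span (uvec ` T)" .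
qed

lemma dim_T:
  assumes "V \<subseteq> {w. \<forall>l. l \<notin> T \<longrightarrow> w l = (0::'a::field)}" "finite T"
  shows "fvs.dim V \<le> card T"
proof -
  have "V \<subseteq> fvs.span (uvec ` T :: (nat \<Rightarrow> 'a::field) set)" using assms span_T by blast
  then have "fvs.dim V \<le> card (uvec ` T :: (nat \<Rightarrow> 'a::field) set)"
    by (intro fvs.dim_le_card) (auto simp: assms(2))
  also have "\<dots> \<le> card T" using card_image_le[OF assms(2), of "uvec :: nat \<Rightarrow> nat \<Rightarrow> 'a"] .
  finally show ?thesis .
qed

lemma trunc_dim:
  fixes V :: "(nat \<Rightarrow> 'a::field) set"
  assumes "fvs.subspace V" "V \<subseteq> vecs N" "t \<le> N"
  shows "fvs.dim V \<le> fvs.dim (V \<inter> vecs t) + (N - t)"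
proof -
  have rn: "fvs.dim V = fvs.dim {x\<in>V. tr t x = 0} + fvs.dim (tr t ` V)"
    using rank_nullity[OF lin_tr assms(1) span_vecs[OF assms(2)]] .
  have "{x\<in>V. tr t x = 0} = V \<inter> vecs t"
    by (auto simp: tr_def vecs_def fun_eq_iff)
  moreover have "fvs.dim (tr t ` V) \<le> card {t..<N}"
  proof (rule dim_T)
    show "tr t ` V \<subseteq> {w. \<forall>l. l \<notin> {t..<N} \<longrightarrow> w l = 0}"
      using assms(2) by (auto simp: tr_def vecs_def)
  qed simp
  ultimately show ?thesis using rn by simp
qed

lemma vecs_subspace: "fvs.subspace (vecs t :: (nat \<Rightarrow> 'a::field) set)"
  by (auto simp: fvs.subspace_def vecs_def vscale_apply)

lemma vecs_mono: "t \<le> N \<Longrightarrow> vecs t \<subseteq> vecs N"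
  by (auto simp: vecs_def)

lemma vecs_galois: "q > 0 \<Longrightarrow> galois_closed q (vecs t :: (nat \<Rightarrow> 'a::field) set)"
  by (auto simp: galois_closed_def vecs_def frob_def)

section \<open>Direct sum\<close>

lemma dsum_subspace:
  fixes C1 C2 :: "(nat \<Rightarrow> 'a::field) set"
  assumes "fvs.subspace C1" "fvs.subspace C2"
  shows "fvs.subspace (code_dsum n C1 C2)"
  unfolding fvs.subspace_def code_dsum_def
proof (intro conjI allI ballI impI)
  have "(0::nat\<Rightarrow>'a) = concat_vec n 0 0" by (auto simp: concat_vec_def)
  then show "(0::nat\<Rightarrow>'a) \<in> {concat_vec n u v |u v. u \<in> C1 \<and> v \<in> C2}"
    using fvs.subspace_0[OF assms(1)] fvs.subspace_0[OF assms(2)] by blast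
next
  fix x y assume "x \<in> {concat_vec n u v |u v. u \<in> C1 \<and> v \<in> C2}" "y \<in> {concat_vec n u v |u v. u \<in> C1 \<and> v \<in> C2}"
  then obtain u v u' v' where "x = concat_vec n u v" "y = concat_vec n u' v'" "u \<in> C1" "v \<in> C2" "u' \<in> C1" "v' \<in> C2"
    by blast
  moreover have "concat_vec n u v + concat_vec n u' v' = concat_vec n (u + u') (v + v')"
    by (auto simp: concat_vec_def)
  ultimately show "x + y \<in> {concat_vec n u v |u v. u \<in> C1 \<and> v \<in> C2}"
    using fvs.subspace_add[OF assms(1)] fvs.subspace_add[OF assms(2)] by blast
next
  fix c x assume "x \<in> {concat_vec n u v |u v. u \<in> C1 \<and> v \<in> C2}"
  then obtain u v where "x = concat_vec n u v" "u \<in> C1" "v \<in> C2" by blast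
  moreover have "vscale c (concat_vec n u v) = concat_vec n (vscale c u) (vscale c v)"
    by (auto simp: concat_vec_def vscale_apply)
  ultimately show "vscale c x \<in> {concat_vec n u v |u v. u \<in> C1 \<and> v \<in> C2}"
    using fvs.subspace_scale[OF assms(1)] fvs.subspace_scale[OF assms(2)] by blast
qed

lemma dsum_vecs:
  assumes "C1 \<subseteq> vecs n" "C2 \<subseteq> vecs n"
  shows "code_dsum n C1 C2 \<subseteq> vecs (2 * n)"
proof
  fix x assume "x \<in> code_dsum n C1 C2"
  then obtain u v where x: "x = concat_vec n u v" "u \<in> C1" "v \<in> C2" by (auto simp: code_dsum_def)
  show "x \<in> vecs (2 * n)" unfolding vecs_def
  proof (intro CollectI allI impI)
    fix i assume "2 * n \<le> i"
    then have "i - n \<ge> n" "\<not> i < n" by auto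
    then show "x i = 0" using x assms by (auto simp: concat_vec_def vecs_def)
  qed
qed

lemma dsum_ker:
  fixes C1 C2 :: "(nat \<Rightarrow> 'a::field) set"
  assumes "C1 \<subseteq> vecs n" "0 \<in> C2"
  shows "{x\<in>code_dsum n C1 C2. p2 n x = 0} = i1 n ` C1"
proof
  show "{x \<in> code_dsum n C1 C2. p2 n x = 0} \<subseteq> i1 n ` C1"
    by (auto simp: code_dsum_def i1_def)
  show "i1 n ` C1 \<subseteq> {x \<in> code_dsum n C1 C2. p2 n x = 0}"
    using assms(2) by (auto simp: code_dsum_def i1_def)
qed

lemma dsum_img:
  assumes "0 \<in> C1"
  shows "p2 n ` code_dsum n C1 C2 = C2"
proof
  show "p2 n ` code_dsum n C1 C2 \<subseteq> C2" by (auto simp: code_dsum_def)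
  show "C2 \<subseteq> p2 n ` code_dsum n C1 C2"
  proof
    fix v assume "v \<in> C2"
    then have "concat_vec n 0 v \<in> code_dsum n C1 C2" using assms by (auto simp: code_dsum_def)
    then show "v \<in> p2 n ` code_dsum n C1 C2" by (metis image_eqI p2_concat)
  qed
qed

lemma i1_inj:
  assumes "u \<in> vecs n" "i1 n u = 0"
  shows "u = 0"
proof
  fix i
  have h: "i1 n u i = 0" using assms(2) by simp
  show "u i = 0 i"
    using h assms(1) by (cases "i < n") (auto simp: i1_def concat_vec_def vecs_def)
qed

lemma dsum_dims:
  fixes C1 C2 :: "(nat \<Rightarrow> 'a::field) set"
  assumes "is_code n k C1" "is_code n k C2"
  shows "fvs.dim {x\<in>code_dsum n C1 C2. p2 n x = 0} = k"
    and "fvs.dim (code_dsum n C1 C2) = 2 * k"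
proof -
  have c1: "fvs.subspace C1" "C1 \<subseteq> vecs n" "fvs.dim C1 = k" using assms(1) is_code_def by auto
  have c2: "fvs.subspace C2" "C2 \<subseteq> vecs n" "fvs.dim C2 = k" using assms(2) is_code_def by auto
  have "fvs.dim (i1 n ` C1) = k"
    using dim_inj_image[OF lin_i1 c1(1) c1(2)] i1_inj c1 by blast
  then show k1: "fvs.dim {x\<in>code_dsum n C1 C2. p2 n x = 0} = k"
    using dsum_ker[OF c1(2) fvs.subspace_0[OF c2(1)]] by simp
  have "fvs.dim (code_dsum n C1 C2) = fvs.dim {x\<in>code_dsum n C1 C2. p2 n x = 0} + fvs.dim (p2 n ` code_dsum n C1 C2)"
    by (rule rank_nullity[OF lin_p2 dsum_subspace[OF c1(1) c2(1)] span_vecs[OF dsum_vecs[OF c1(2) c2(2)]]])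
  then show "fvs.dim (code_dsum n C1 C2) = 2 * k"
    using k1 dsum_img[OF fvs.subspace_0[OF c1(1)]] c2(3) by simp
qed



lemma rw_le_N: "rank_weight q N (v :: nat \<Rightarrow> 'a::{field,finite}) \<le> N"
  unfolding rank_weight_def
proof (rule Fq_dim_le)
  fix S assume "S \<subseteq> v ` {..<N}"
  then have "card S \<le> card (v ` {..<N})" by (intro card_mono) auto
  also have "\<dots> \<le> N" using card_image_le[of "{..<N}" v] by simp
  finally show "card S \<le> N" .
qed simp

lemma mrd_wt:
  fixes C :: "(nat \<Rightarrow> 'a::{field,finite}) set"
  assumes "is_MRD q m n k d C" "u \<in> C" "u \<noteq> 0"
  shows "d \<le> rank_weight q n u"
proof -
  have d: "min_rank_dist q n C = d" using assms(1) is_MRD_def is_code_d_def by blast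
  have fin: "finite {rank_weight q n v | v. v \<in> C \<and> v \<noteq> 0}"
    by (rule finite_subset[of _ "{..n}"]) (auto simp: rw_le_N)
  have "min_rank_dist q n C \<le> rank_weight q n u"
    unfolding min_rank_dist_def by (rule Min_le[OF fin]) (use assms in blast)
  then show ?thesis using d by simp
qed

lemma dsum_wt:
  fixes C1 C2 :: "(nat \<Rightarrow> 'a::{field,finite}) set"
  assumes w1: "\<And>u. u \<in> C1 \<Longrightarrow> u \<noteq> 0 \<Longrightarrow> \<delta> \<le> rank_weight q n u"
    and w2: "\<And>u. u \<in> C2 \<Longrightarrow> u \<noteq> 0 \<Longrightarrow> \<delta> \<le> rank_weight q n u"
    and x: "x \<in> code_dsum n C1 C2" "x \<noteq> 0"
  shows "\<delta> \<le> rank_weight q (2 * n) x"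
proof -
  obtain u v where uv: "x = concat_vec n u v" "u \<in> C1" "v \<in> C2" using x(1) by (auto simp: code_dsum_def)
  show ?thesis
  proof (cases "u = 0")
    case False
    have "u ` {..<n} \<subseteq> x ` {..<2 * n}"
    proof
      fix y assume "y \<in> u ` {..<n}"
      then obtain i where "i < n" "y = u i" by blast
      then have "y = x i" "i < 2 * n" using uv(1) by (auto simp: concat_vec_def)
      then show "y \<in> x ` {..<2 * n}" by blast
    qed
    then have "rank_weight q n u \<le> rank_weight q (2 * n) x"
      unfolding rank_weight_def by (intro Fq_dim_mono) auto
    then show ?thesis using w1[OF uv(2) False] by simp
  next
    case True
    have "v \<noteq> 0"
    proof
      assume "v = 0"
      then have "x = 0" using uv(1) True by (auto simp: concat_vec_def fun_eq_iff)
      then show False using x(2) by simp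
    qed
    have "v ` {..<n} \<subseteq> x ` {..<2 * n}"
    proof
      fix y assume "y \<in> v ` {..<n}"
      then obtain i where "i < n" "y = v i" by blast
      then have "y = x (i + n)" "i + n < 2 * n" using uv(1) by (auto simp: concat_vec_def)
      then show "y \<in> x ` {..<2 * n}" by blast
    qed
    then have "rank_weight q n v \<le> rank_weight q (2 * n) x"
      unfolding rank_weight_def by (intro Fq_dim_mono) auto
    then show ?thesis using w2[OF uv(3) \<open>v \<noteq> 0\<close>] by simp
  qed
qed

lemma dim_subset':
  fixes V :: "(nat \<Rightarrow> 'a::field) set"
  assumes "V \<subseteq> W" "W \<subseteq> vecs N"
  shows "fvs.dim V \<le> fvs.dim W"
  using dim_mono'[of V W N] assms fvs.span_superset by blast

context fqctx
begin

lemma frob_p2: "p2 n (frob q x) = frob q (p2 n (x :: nat \<Rightarrow> 'a))"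
  by (simp add: p2_def frob_def)

lemma frob_0: "frob q (0 :: nat \<Rightarrow> 'a) = 0"
  using qpos by (simp add: frob_def fun_eq_iff)

lemma lower_main:
  fixes C1 C2 A :: "(nat \<Rightarrow> 'a) set"
  assumes code1: "is_code n k C1" and code2: "is_code n k C2"
    and w1: "\<And>u. u \<in> C1 \<Longrightarrow> u \<noteq> 0 \<Longrightarrow> n - k + 1 \<le> rank_weight q n u"
    and w2: "\<And>u. u \<in> C2 \<Longrightarrow> u \<noteq> 0 \<Longrightarrow> n - k + 1 \<le> rank_weight q n u"
    and A: "fvs.subspace A" "A \<subseteq> vecs (2 * n)" "galois_closed q A"
    and i: "1 \<le> i" "i \<le> fvs.dim (A \<inter> code_dsum n C1 C2)"
  shows "(i \<le> k \<longrightarrow> n - k + i \<le> fvs.dim A) \<and> (k < i \<longrightarrow> 2 * n - 2 * k + i \<le> fvs.dim A)"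
proof -
  define C where "C = code_dsum n C1 C2"
  have c1: "fvs.subspace C1" "C1 \<subseteq> vecs n" "fvs.dim C1 = k" using code1 is_code_def by auto
  have c2: "fvs.subspace C2" "C2 \<subseteq> vecs n" "fvs.dim C2 = k" using code2 is_code_def by auto
  have sC: "fvs.subspace C" using dsum_subspace[OF c1(1) c2(1)] C_def by simp
  have vC: "C \<subseteq> vecs (2 * n)" using dsum_vecs[OF c1(2) c2(2)] C_def by simp
  have kn: "k \<le> n" using dim_le_N[OF span_vecs[OF c1(2)]] c1(3) by simp
  define D where "D = A \<inter> C"
  have sD: "fvs.subspace D" using fvs.subspace_inter[OF A(1) sC] D_def by simp
  have vD: "D \<subseteq> vecs (2 * n)" using A(2) D_def by blast
  have rnA: "fvs.dim A = fvs.dim {x\<in>A. p2 n x = 0} + fvs.dim (p2 n ` A)"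
    using rank_nullity[OF lin_p2 A(1) span_vecs[OF A(2)]] .
  have rnD: "fvs.dim D = fvs.dim {x\<in>D. p2 n x = 0} + fvs.dim (p2 n ` D)"
    using rank_nullity[OF lin_p2 sD span_vecs[OF vD]] .
  define B1 where "B1 = {x\<in>A. p2 n x = 0}"
  define B2 where "B2 = p2 n ` A"
  have sB1: "fvs.subspace B1" using subspace_ker[OF A(1) lin_p2] B1_def by simp
  have vB1: "B1 \<subseteq> vecs (2 * n)" using A(2) B1_def by blast
  have gB1: "galois_closed q B1" using A(3) unfolding galois_closed_def B1_def
    by (auto simp: frob_p2 frob_0)
  have sB2: "fvs.subspace B2" using subspace_img[OF A(1) lin_p2] B2_def by simp
  have vB2: "B2 \<subseteq> vecs n" using A(2) unfolding B2_def by (auto simp: vecs_def p2_def)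
  have gB2: "galois_closed q B2" using A(3) unfolding galois_closed_def B2_def
    by (auto simp: frob_p2[symmetric])
  define a where "a = fvs.dim {x\<in>D. p2 n x = 0}"
  define b where "b = fvs.dim (p2 n ` D)"
  have iab: "i \<le> a + b" using i(2) rnD a_def b_def D_def C_def by simp
  have a1: "a \<le> fvs.dim (B1 \<inter> C)"
    unfolding a_def by (rule dim_subset'[of _ _ "2 * n"]) (use vC D_def B1_def in auto)
  have imgC: "p2 n ` C = C2" using dsum_img[OF fvs.subspace_0[OF c1(1)]] C_def by simp
  have b1: "b \<le> fvs.dim (B2 \<inter> C2)"
    unfolding b_def by (rule dim_subset'[of _ _ n]) (use vB2 D_def B2_def imgC in auto)
  have ak: "a \<le> k"
  proof -
    have "a \<le> fvs.dim {x\<in>C. p2 n x = 0}"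
      unfolding a_def by (rule dim_subset'[of _ _ "2 * n"]) (use vC D_def in auto)
    then show ?thesis using dsum_dims(1)[OF code1 code2] C_def by simp
  qed
  have bk: "b \<le> k"
  proof -
    have "b \<le> fvs.dim C2"
      unfolding b_def by (rule dim_subset'[of _ _ n]) (use c2(2) D_def imgC in auto)
    then show ?thesis using c2(3) by simp
  qed
  have wC: "\<And>x. x \<in> C \<Longrightarrow> x \<noteq> 0 \<Longrightarrow> n - k + 1 \<le> rank_weight q (2 * n) x"
    using dsum_wt[OF w1 w2] C_def by blast
  have LA: "n - k + 1 + a \<le> fvs.dim B1 + 1" if "1 \<le> a"
    using lowerH[OF sB1 vB1 gB1 sC wC that a1] .
  have LB: "n - k + 1 + b \<le> fvs.dim B2 + 1" if "1 \<le> b"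
    using lowerH[OF sB2 vB2 gB2 c2(1) w2 that b1] .
  have dA: "fvs.dim A = fvs.dim B1 + fvs.dim B2" using rnA B1_def B2_def by simp
  show ?thesis
  proof (intro conjI impI)
    assume "i \<le> k"
    show "n - k + i \<le> fvs.dim A"
    proof (cases "a = 0")
      case True
      then show ?thesis using LB iab i(1) dA kn by simp
    next
      case False
      show ?thesis
      proof (cases "b = 0")
        case True
        then show ?thesis using LA iab i(1) dA kn \<open>a \<noteq> 0\<close> by simp
      next
        case False
        then show ?thesis using LA LB iab dA kn \<open>a \<noteq> 0\<close> by simp
      qed
    qed
  next
    assume "k < i"
    then have "a \<ge> 1" "b \<ge> 1" using iab ak bk by auto
    then show "2 * n - 2 * k + i \<le> fvs.dim A" using LA LB iab dA kn by simp
  qed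
qed

end



lemma wit1:
  fixes C1 C2 :: "(nat \<Rightarrow> 'a::field) set"
  assumes code1: "is_code n k C1" and code2: "is_code n k C2" and i: "i \<le> k"
  shows "i \<le> fvs.dim (vecs (n - k + i) \<inter> code_dsum n C1 C2)"
proof -
  have c1: "fvs.subspace C1" "C1 \<subseteq> vecs n" "fvs.dim C1 = k" using code1 is_code_def by auto
  have c2: "fvs.subspace C2" "C2 \<subseteq> vecs n" "fvs.dim C2 = k" using code2 is_code_def by auto
  have kn: "k \<le> n" using dim_le_N[OF span_vecs[OF c1(2)]] c1(3) by simp
  define t where "t = n - k + i"
  have tn: "t \<le> n" using t_def i kn by simp
  have s1: "fvs.subspace (C1 \<inter> vecs t)" using fvs.subspace_inter[OF c1(1) vecs_subspace] .
  have v1: "C1 \<inter> vecs t \<subseteq> vecs n" using c1(2) by blast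
  have "k \<le> fvs.dim (C1 \<inter> vecs t) + (n - t)" using trunc_dim[OF c1(1) c1(2) tn] c1(3) by simp
  then have ge: "i \<le> fvs.dim (C1 \<inter> vecs t)" using t_def kn i by simp
  have eq: "fvs.dim (i1 n ` (C1 \<inter> vecs t)) = fvs.dim (C1 \<inter> vecs t)"
    using dim_inj_image[OF lin_i1 s1 v1] i1_inj v1 by blast
  have "i1 n ` (C1 \<inter> vecs t) \<subseteq> vecs t \<inter> code_dsum n C1 C2"
  proof
    fix x assume "x \<in> i1 n ` (C1 \<inter> vecs t)"
    then obtain u where u: "u \<in> C1" "u \<in> vecs t" "x = i1 n u" by blast
    have "x \<in> code_dsum n C1 C2" using u fvs.subspace_0[OF c2(1)] by (auto simp: code_dsum_def i1_def)
    moreover have "x \<in> vecs t" using u by (auto simp: vecs_def i1_def concat_vec_def)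
    ultimately show "x \<in> vecs t \<inter> code_dsum n C1 C2" by blast
  qed
  then have "fvs.dim (i1 n ` (C1 \<inter> vecs t)) \<le> fvs.dim (vecs t \<inter> code_dsum n C1 C2)"
    by (rule dim_subset'[of _ _ t]) blast
  then show ?thesis using ge eq t_def by simp
qed

lemma wit2:
  fixes C1 C2 :: "(nat \<Rightarrow> 'a::field) set"
  assumes code1: "is_code n k C1" and code2: "is_code n k C2" and i: "k < i" "i \<le> 2 * k"
  shows "i \<le> fvs.dim (vecs (2 * n - 2 * k + i) \<inter> code_dsum n C1 C2)"
proof -
  have c1: "fvs.subspace C1" "C1 \<subseteq> vecs n" "fvs.dim C1 = k" using code1 is_code_def by auto
  have c2: "fvs.subspace C2" "C2 \<subseteq> vecs n" "fvs.dim C2 = k" using code2 is_code_def by auto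
  have kn: "k \<le> n" using dim_le_N[OF span_vecs[OF c1(2)]] c1(3) by simp
  define C where "C = code_dsum n C1 C2"
  have sC: "fvs.subspace C" using dsum_subspace[OF c1(1) c2(1)] C_def by simp
  have vC: "C \<subseteq> vecs (2 * n)" using dsum_vecs[OF c1(2) c2(2)] C_def by simp
  define s where "s = n + i - 2 * k"
  define t where "t = 2 * n - 2 * k + i"
  have sn: "s \<le> n" "t = n + s" using s_def t_def i kn by auto
  define D where "D = vecs t \<inter> C"
  have sD: "fvs.subspace D" using fvs.subspace_inter[OF vecs_subspace sC] D_def by simp
  have vD: "D \<subseteq> vecs (2 * n)" using vC D_def by blast
  have rn: "fvs.dim D = fvs.dim {x\<in>D. p2 n x = 0} + fvs.dim (p2 n ` D)"
    using rank_nullity[OF lin_p2 sD span_vecs[OF vD]] .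
  have "{x\<in>D. p2 n x = 0} = {x\<in>C. p2 n x = 0}"
  proof
    show "{x\<in>D. p2 n x = 0} \<subseteq> {x\<in>C. p2 n x = 0}" using D_def by auto
  next
    show "{x\<in>C. p2 n x = 0} \<subseteq> {x\<in>D. p2 n x = 0}"
    proof
    fix x assume x: "x \<in> {x\<in>C. p2 n x = 0}"
    have "x \<in> vecs t" unfolding vecs_def
    proof (intro CollectI allI impI)
      fix l assume "t \<le> l"
      then have e: "l - n + n = l" using sn by simp
      have "p2 n x (l - n) = x (l - n + n)" by (simp add: p2_def)
      then have "x l = p2 n x (l - n)" by (simp only: e)
      also have "\<dots> = 0" using x by simp
      finally show "x l = 0" .
    qed
    then show "x \<in> {x\<in>D. p2 n x = 0}" using x D_def by blast
    qed
  qed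
  then have k1: "fvs.dim {x\<in>D. p2 n x = 0} = k" using dsum_dims(1)[OF code1 code2] C_def by simp
  have s2: "fvs.subspace (C2 \<inter> vecs s)" using fvs.subspace_inter[OF c2(1) vecs_subspace] .
  have "k \<le> fvs.dim (C2 \<inter> vecs s) + (n - s)" using trunc_dim[OF c2(1) c2(2) sn(1)] c2(3) by simp
  then have ge: "i - k \<le> fvs.dim (C2 \<inter> vecs s)" using s_def kn i by simp
  have "C2 \<inter> vecs s \<subseteq> p2 n ` D"
  proof
    fix v assume v: "v \<in> C2 \<inter> vecs s"
    have "concat_vec n 0 v \<in> C" using v fvs.subspace_0[OF c1(1)] C_def by (auto simp: code_dsum_def)
    moreover have "concat_vec n 0 v \<in> vecs t" using v sn by (auto simp: vecs_def concat_vec_def)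
    ultimately have "concat_vec n 0 v \<in> D" using D_def by blast
    then show "v \<in> p2 n ` D" by (metis image_eqI p2_concat)
  qed
  then have "fvs.dim (C2 \<inter> vecs s) \<le> fvs.dim (p2 n ` D)"
    by (rule dim_subset'[of _ _ n]) (use vD in \<open>auto simp: vecs_def p2_def\<close>)
  then show ?thesis using rn k1 ge D_def C_def t_def i by simp
qed

theorem proposition4p10:
  fixes q m n k :: nat
    and C1 C2 :: "(nat \<Rightarrow> 'a::{field,finite}) set"
  assumes "prime_power q"
    and "card (UNIV :: 'a set) = q ^ m"
    and "n > 0" and "k > 0" and "m > 0"
    and "is_MRD q m n k (n - k + 1) C1"
    and "is_MRD q m n k (n - k + 1) C2"
  shows "is_code (2 * n) (2 * k) (code_dsum n C1 C2)
    \<and> (\<forall>i. 1 \<le> i \<and> i \<le> k \<longrightarrow> gen_rank_weight q (2 * n) (code_dsum n C1 C2) i = n - k + i)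
    \<and> (\<forall>i. k + 1 \<le> i \<and> i \<le> 2 * k \<longrightarrow> gen_rank_weight q (2 * n) (code_dsum n C1 C2) i = 2 * n - 2 * k + i)"
proof -
  interpret F: fqctx q m
    using assms by unfold_locales auto
  have code1: "is_code n k C1" using assms(6) is_MRD_def is_code_d_def by blast
  have code2: "is_code n k C2" using assms(7) is_MRD_def is_code_d_def by blast
  have c1: "fvs.subspace C1" "C1 \<subseteq> vecs n" "fvs.dim C1 = k" using code1 is_code_def by auto
  have c2: "fvs.subspace C2" "C2 \<subseteq> vecs n" "fvs.dim C2 = k" using code2 is_code_def by auto
  define C where "C = code_dsum n C1 C2"
  have sC: "fvs.subspace C" using dsum_subspace[OF c1(1) c2(1)] C_def by simp
  have vC: "C \<subseteq> vecs (2 * n)" using dsum_vecs[OF c1(2) c2(2)] C_def by simp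
  have codeC: "is_code (2 * n) (2 * k) C"
    unfolding is_code_def using sC vC dsum_dims(2)[OF code1 code2] C_def by simp
  have w1: "\<And>u. u \<in> C1 \<Longrightarrow> u \<noteq> 0 \<Longrightarrow> n - k + 1 \<le> rank_weight q n u"
    using mrd_wt[OF assms(6)] by blast
  have w2: "\<And>u. u \<in> C2 \<Longrightarrow> u \<noteq> 0 \<Longrightarrow> n - k + 1 \<le> rank_weight q n u"
    using mrd_wt[OF assms(7)] by blast
  have key: "gen_rank_weight q (2 * n) C i = t"
    if i1: "1 \<le> i" and tle: "t \<le> 2 * n" and wit: "i \<le> fvs.dim (vecs t \<inter> C)"
      and low: "\<And>A. fvs.subspace A \<Longrightarrow> A \<subseteq> vecs (2 * n) \<Longrightarrow> galois_closed q A \<Longrightarrow> i \<le> fvs.dim (A \<inter> C) \<Longrightarrow> t \<le> fvs.dim A"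
    for i t
  proof -
    define G where "G = {fvs.dim A | A. fvs.subspace A \<and> A \<subseteq> vecs (2 * n) \<and> galois_closed q A \<and> fvs.dim (A \<inter> C) \<ge> i}"
    have finG: "finite G"
    proof (rule finite_subset[of _ "{..2 * n}"])
      show "G \<subseteq> {..2 * n}"
      proof
        fix g assume "g \<in> G"
        then obtain A :: "(nat \<Rightarrow> 'a) set" where "g = fvs.dim A" "A \<subseteq> vecs (2 * n)" unfolding G_def by blast
        then show "g \<in> {..2 * n}" using dim_le_N[OF span_vecs[of A "2 * n"]] by simp
      qed
    qed simp
    have "fvs.subspace (vecs t :: (nat \<Rightarrow> 'a) set) \<and> (vecs t :: (nat \<Rightarrow> 'a) set) \<subseteq> vecs (2 * n) \<and> galois_closed q (vecs t :: (nat \<Rightarrow> 'a) set) \<and> i \<le> fvs.dim (vecs t \<inter> C)"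
      using vecs_subspace[of t] vecs_mono[OF tle] vecs_galois[OF F.qpos, of t] wit by blast
    then have inG: "fvs.dim (vecs t :: (nat \<Rightarrow> 'a) set) \<in> G"
      unfolding G_def by blast
    have "Min G \<in> G" using finG inG Min_in by blast
    then obtain A where A: "Min G = fvs.dim A" "fvs.subspace A" "A \<subseteq> vecs (2 * n)" "galois_closed q A" "i \<le> fvs.dim (A \<inter> C)"
      unfolding G_def by blast
    then have ge: "t \<le> Min G" using low by simp
    have "Min G \<le> fvs.dim (vecs t :: (nat \<Rightarrow> 'a) set)" using Min_le[OF finG inG] .
    also have "\<dots> \<le> t" using dim_le_N[OF span_vecs[of "vecs t :: (nat \<Rightarrow> 'a) set" t]] by simp
    finally show ?thesis using ge unfolding gen_rank_weight_def G_def by simp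
  qed
  have kn: "k \<le> n" using dim_le_N[OF span_vecs[OF c1(2)]] c1(3) by simp
  have part2: "\<forall>i. 1 \<le> i \<and> i \<le> k \<longrightarrow> gen_rank_weight q (2 * n) C i = n - k + i"
  proof (intro allI impI)
    fix i assume i: "1 \<le> i \<and> i \<le> k"
    show "gen_rank_weight q (2 * n) C i = n - k + i"
    proof (rule key)
      show "1 \<le> i" using i by simp
      show "n - k + i \<le> 2 * n" using i kn by linarith
      show "i \<le> fvs.dim (vecs (n - k + i) \<inter> C)" using wit1[OF code1 code2] i C_def by simp
      fix A :: "(nat \<Rightarrow> 'a) set"
      assume "fvs.subspace A" "A \<subseteq> vecs (2 * n)" "galois_closed q A" "i \<le> fvs.dim (A \<inter> C)"
      then show "n - k + i \<le> fvs.dim A"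
        using F.lower_main[OF code1 code2 w1 w2, of A i] i C_def by simp
    qed
  qed
  have part3: "\<forall>i. k + 1 \<le> i \<and> i \<le> 2 * k \<longrightarrow> gen_rank_weight q (2 * n) C i = 2 * n - 2 * k + i"
  proof (intro allI impI)
    fix i assume i: "k + 1 \<le> i \<and> i \<le> 2 * k"
    show "gen_rank_weight q (2 * n) C i = 2 * n - 2 * k + i"
    proof (rule key)
      show "1 \<le> i" using i by simp
      show "2 * n - 2 * k + i \<le> 2 * n" using i kn by linarith
      show "i \<le> fvs.dim (vecs (2 * n - 2 * k + i) \<inter> C)" using wit2[OF code1 code2] i C_def by simp
      fix A :: "(nat \<Rightarrow> 'a) set"
      assume "fvs.subspace A" "A \<subseteq> vecs (2 * n)" "galois_closed q A" "i \<le> fvs.dim (A \<inter> C)"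
      then show "2 * n - 2 * k + i \<le> fvs.dim A"
        using F.lower_main[OF code1 code2 w1 w2, of A i] i C_def by simp
    qed
  qed
  show ?thesis using codeC part2 part3 C_def by simp
qed

end
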